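(* There are absolute constants $C,c>0$ such that for every $n$-point metric space $(X,d)$ and every $\Delta>0$, with $\beta=C\log n$, there is a probability distribution $\mu$ over partitions of $X$ satisfying: (a) for all $\Pi\in\mathrm{supp}(\mu)$ and all $S\in\Pi$, $\mathrm{diam}(S)\le\Delta$; (b) for all $x,y\in X$, $\Pr_{\Pi\sim\mu}[\Pi(x)\neq\Pi(y)]\le \beta d(x,y)/\Delta$; (c) for every shortest path $P$ with $d(P)\le\Delta/\beta$ and every $t\ge1$, $\Pr_{\Pi\sim\mu}[Z_P>t]\le 2e^{-ct}$.
   Context: For a partition $\Pi$ of $X$ and $x\in X$, $\Pi(x)$ denotes the cluster of $\Pi$ containing $x$. A shortest path between $x_0,x_\ell\in X$ is a sequence $P=(x_0,x_1,\dots,x_\ell)$ of points of $X$ with $\sum_{i=1}^{\ell}d(x_{i-1},x_i)=d(x_0,x_\ell)$; its length is $d(P)=d(x_0,x_\ell)$. $P$ meets a set $S$ if $S\cap P\neq\emptyset$. The degree of separation is $Z_P(\Pi)=\#\{S\in\Pi: P \text{ meets } S\}$. *)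

theory Defs
  imports "HOL-Probability.Probability"
begin

definition metric_on :: "'a set \<Rightarrow> ('a \<Rightarrow> 'a \<Rightarrow> real) \<Rightarrow> bool" where
  "metric_on X d \<longleftrightarrow>
     (\<forall>x\<in>X. \<forall>y\<in>X. 0 \<le> d x y \<and> (d x y = 0 \<longleftrightarrow> x = y) \<and> d x y = d y x) \<and>
     (\<forall>x\<in>X. \<forall>y\<in>X. \<forall>z\<in>X. d x z \<le> d x y + d y z)"

definition diam :: "('a \<Rightarrow> 'a \<Rightarrow> real) \<Rightarrow> 'a set \<Rightarrow> real" where
  "diam d S = Sup {d x y | x y. x \<in> S \<and> y \<in> S}"

definition cluster :: "'a set set \<Rightarrow> 'a \<Rightarrow> 'a set" where
  "cluster Part x = (THE S. S \<in> Part \<and> x \<in> S)"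

definition shortest_path :: "'a set \<Rightarrow> ('a \<Rightarrow> 'a \<Rightarrow> real) \<Rightarrow> 'a list \<Rightarrow> bool" where
  "shortest_path X d P \<longleftrightarrow> P \<noteq> [] \<and> set P \<subseteq> X \<and>
     (\<Sum>i<length P - 1. d (P ! i) (P ! Suc i)) = d (hd P) (last P)"

definition path_length :: "('a \<Rightarrow> 'a \<Rightarrow> real) \<Rightarrow> 'a list \<Rightarrow> real" where
  "path_length d P = d (hd P) (last P)"

definition degree_sep :: "'a list \<Rightarrow> 'a set set \<Rightarrow> nat" where
  "degree_sep P Part = card {S \<in> Part. S \<inter> set P \<noteq> {}}"

end

theory Submission
  imports Defs
begin

lemma prob_bind_finite:
  assumes "finite (set_pmf M)"
  shows "measure_pmf.prob (bind_pmf M f) A = (\<Sum>x\<in>set_pmf M. pmf M x * measure_pmf.prob (f x) A)"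
proof -
  have "emeasure (measure_pmf (bind_pmf M f)) A = (\<integral>\<^sup>+x. emeasure (f x) A \<partial>M)"
    by (rule emeasure_bind_pmf)
  also have "\<dots> = (\<Sum>x\<in>set_pmf M. emeasure (f x) A * pmf M x)"
    by (rule nn_integral_measure_pmf_finite[OF assms]) auto
  also have "\<dots> = (\<Sum>x\<in>set_pmf M. ennreal (measure_pmf.prob (f x) A) * pmf M x)"
    by (simp add: measure_pmf.emeasure_eq_measure)
  also have "\<dots> = ennreal (\<Sum>x\<in>set_pmf M. pmf M x * measure_pmf.prob (f x) A)"
    by (subst sum_ennreal[symmetric]) (auto simp: ennreal_mult'' mult.commute)
  finally show ?thesis
    by (simp add: measure_pmf.emeasure_eq_measure sum_nonneg)
qed

lemma prob_as_sum:
  assumes "finite (set_pmf M)"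
  shows "measure_pmf.prob M S = (\<Sum>x\<in>set_pmf M. pmf M x * indicator S x)"
proof -
  have "measure_pmf.prob M S = measure_pmf.prob M (S \<inter> set_pmf M)"
    by (simp add: measure_Int_set_pmf)
  also have "\<dots> = sum (pmf M) (S \<inter> set_pmf M)"
    using assms by (simp add: measure_measure_pmf_finite)
  also have "\<dots> = (\<Sum>x\<in>set_pmf M. pmf M x * indicator S x)"
    using assms by (simp add: sum.If_cases Int_commute indicator_def)
  finally show ?thesis .
qed

lemma prob_cong_support:
  assumes "\<And>x. x \<in> set_pmf M \<Longrightarrow> x \<in> A \<longleftrightarrow> x \<in> A'"
  shows "measure_pmf.prob M A = measure_pmf.prob M A'"
proof -
  have "A \<inter> set_pmf M = A' \<inter> set_pmf M" using assms by blast
  then show ?thesis by (metis measure_Int_set_pmf)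
qed

lemma prob_zero_support:
  assumes "\<And>x. x \<in> set_pmf M \<Longrightarrow> x \<notin> A"
  shows "measure_pmf.prob M A = 0"
  using prob_cong_support[of M A "{}"] assms by auto

lemma sum_pmf_mono:
  assumes "finite (set_pmf M)" "\<And>x. x \<in> set_pmf M \<Longrightarrow> f x \<le> g x"
  shows "(\<Sum>x\<in>set_pmf M. pmf M x * f x) \<le> (\<Sum>x\<in>set_pmf M. pmf M x * g x)"
  by (intro sum_mono mult_left_mono assms) auto

primrec carve :: "(nat \<Rightarrow> nat \<Rightarrow> real) \<Rightarrow> real pmf \<Rightarrow> nat list \<Rightarrow> nat set \<Rightarrow> nat set set pmf" where
  "carve d rp [] R = return_pmf {}"
| "carve d rp (v#vs) R = bind_pmf rp (\<lambda>r. map_pmf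
      (\<lambda>P. if {x\<in>R. d v x \<le> r} = {} then P else insert {x\<in>R. d v x \<le> r} P)
      (carve d rp vs (R - {x\<in>R. d v x \<le> r})))"

lemma carve_blocks:
  "P \<in> set_pmf (carve d rp vs R) \<Longrightarrow> B \<in> P \<Longrightarrow> B \<subseteq> R \<and> (\<exists>v\<in>set vs. \<exists>r\<in>set_pmf rp. B \<subseteq> {x. d v x \<le> r})"
proof (induction vs arbitrary: R P)
  case Nil then show ?case by simp
next
  case (Cons v vs)
  from Cons.prems(1) obtain r where r: "r \<in> set_pmf rp" and
    "P \<in> set_pmf (map_pmf (\<lambda>P. if {x\<in>R. d v x \<le> r} = {} then P else insert {x\<in>R. d v x \<le> r} P)
      (carve d rp vs (R - {x\<in>R. d v x \<le> r})))" by (simp only: carve.simps set_bind_pmf) blast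
  then obtain P' where P': "P' \<in> set_pmf (carve d rp vs (R - {x\<in>R. d v x \<le> r}))"
    and P: "P = (if {x\<in>R. d v x \<le> r} = {} then P' else insert {x\<in>R. d v x \<le> r} P')"
    by (simp only: set_map_pmf) blast
  show ?case
  proof (cases "B \<in> P'")
    case True
    from Cons.IH[OF P' True] show ?thesis by auto
  next
    case False
    with P Cons.prems have "B = {x\<in>R. d v x \<le> r}" by (auto split: if_splits)
    with r show ?thesis by auto
  qed
qed

lemma carve_partition:
  assumes "P \<in> set_pmf (carve d rp vs R)" "\<forall>r\<in>set_pmf rp. 0 \<le> r" "\<forall>v\<in>R. d v v = 0" "R \<subseteq> set vs"
  shows "partition_on R P"
  using assms
proof (induction vs arbitrary: R P)
  case Nil then show ?case by (simp add: partition_on_empty)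
next
  case (Cons v vs)
  from Cons.prems(1) obtain r where r: "r \<in> set_pmf rp" and
    "P \<in> set_pmf (map_pmf (\<lambda>P. if {x\<in>R. d v x \<le> r} = {} then P else insert {x\<in>R. d v x \<le> r} P)
      (carve d rp vs (R - {x\<in>R. d v x \<le> r})))" by (simp only: carve.simps set_bind_pmf) blast
  then obtain P' where P': "P' \<in> set_pmf (carve d rp vs (R - {x\<in>R. d v x \<le> r}))"
    and P: "P = (if {x\<in>R. d v x \<le> r} = {} then P' else insert {x\<in>R. d v x \<le> r} P')"
    by (simp only: set_map_pmf) blast
  define B where "B = {x\<in>R. d v x \<le> r}"
  have sub: "R - B \<subseteq> set vs"
    using Cons.prems r unfolding B_def by auto
  have IH: "partition_on (R - B) P'"
    using Cons.IH[OF P'[folded B_def]] Cons.prems sub by auto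
  show ?case
  proof (cases "B = {}")
    case True
    then have "R - B = R" by simp
    then show ?thesis using P IH True B_def by simp
  next
    case False
    have "disjnt B (\<Union>P')"
      using carve_blocks[OF P'] unfolding B_def disjnt_def by blast
    then show ?thesis using P IH False B_def
      by (simp add: partition_on_insert) (auto)
  qed
qed

lemma carve_cons_prob:
  assumes "finite (set_pmf rp)"
  shows "measure_pmf.prob (carve d rp (v#vs) R) E =
    (\<Sum>r\<in>set_pmf rp. pmf rp r * measure_pmf.prob (carve d rp vs (R - {x\<in>R. d v x \<le> r}))
       ((\<lambda>P. if {x\<in>R. d v x \<le> r} = {} then P else insert {x\<in>R. d v x \<le> r} P) -` E))"
  by (simp only: carve.simps prob_bind_finite[OF assms] measure_map_pmf)

lemma prob_lt_compl:
  "measure_pmf.prob M {r::real. r < m} = 1 - measure_pmf.prob M {r. m \<le> r}"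
proof -
  have "{r::real. r < m} = UNIV - {r. m \<le> r}" by auto
  moreover have "measure_pmf.prob M (space (measure_pmf M) - {r. m \<le> r}) = 1 - measure_pmf.prob M {r. m \<le> r}"
    by (rule measure_pmf.prob_compl) simp
  ultimately show ?thesis by simp
qed

lemma carve_sep:
  fixes \<kappa> D e :: real
  assumes fin: "finite (set_pmf rp)" and nn: "\<forall>r\<in>set_pmf rp. 0 \<le> r"
    and key: "\<And>a b. b - a \<le> D \<Longrightarrow> measure_pmf.prob rp {r. a \<le> r \<and> r < b} \<le> \<kappa> * D * (measure_pmf.prob rp {r. a \<le> r} + e)"
    and e: "0 \<le> e" and kD: "0 \<le> \<kappa> * D"
    and dv: "\<forall>v\<in>set vs. \<bar>d v x - d v y\<bar> \<le> D" and dself: "d x x = 0" "d y y = 0"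
    and xy: "x \<in> R" "y \<in> R" "x \<in> set vs" "y \<in> set vs"
  shows "measure_pmf.prob (carve d rp vs R) {P. \<not>(\<exists>B\<in>P. x\<in>B \<and> y\<in>B)} \<le> \<kappa>*D*(1 + length vs * e)"
  using dv xy
proof (induction vs arbitrary: R)
  case Nil then show ?case by simp
next
  case (Cons v vs)
  define E where "E = {P. \<not>(\<exists>B\<in>P. x\<in>B \<and> y\<in>B)}"
  define m where "m = min (d v x) (d v y)"
  define M where "M = max (d v x) (d v y)"
  define F :: real where "F = \<kappa>*D*(1 + length vs * e)"
  define G where "G = measure_pmf.prob rp {r. m \<le> r}"
  let ?B = "\<lambda>r. {z\<in>R. d v z \<le> r}"
  let ?g = "\<lambda>r P. if ?B r = {} then P else insert (?B r) P"
  have pt: "measure_pmf.prob (carve d rp vs (R - ?B r)) (?g r -` E)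
      \<le> (indicator {r. m \<le> r \<and> r < M} r::real) + (indicator {r. r < m} r::real) * F" if r: "r \<in> set_pmf rp" for r
  proof -
    consider "r < m" | "m \<le> r \<and> r < M" | "M \<le> r" by linarith
    then show ?thesis
    proof cases
      case 1
      then have nx: "x \<notin> ?B r" "y \<notin> ?B r" unfolding m_def by auto
      have "x \<noteq> v" "y \<noteq> v" using nx nn r dself Cons.prems by auto
      then have xs: "x \<in> set vs" "y \<in> set vs" using Cons.prems by auto
      have "measure_pmf.prob (carve d rp vs (R - ?B r)) (?g r -` E) = measure_pmf.prob (carve d rp vs (R - ?B r)) E"
        by (rule prob_cong_support) (use nx in \<open>auto simp: E_def\<close>)
      also have "\<dots> \<le> F"
        unfolding E_def F_def by (rule Cons.IH) (use Cons.prems nx xs in auto)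
      finally show ?thesis using 1 by simp
    next
      case 2
      then show ?thesis by simp
    next
      case 3
      then have yx: "x \<in> ?B r" "y \<in> ?B r" unfolding M_def using Cons.prems by auto
      have "measure_pmf.prob (carve d rp vs (R - ?B r)) (?g r -` E) = 0"
        by (rule prob_zero_support) (use yx in \<open>auto simp: E_def\<close>)
      then show ?thesis using 3 unfolding m_def M_def by (simp add: indicator_def)
    qed
  qed
  have "measure_pmf.prob (carve d rp (v#vs) R) E =
      (\<Sum>r\<in>set_pmf rp. pmf rp r * measure_pmf.prob (carve d rp vs (R - ?B r)) (?g r -` E))"
    by (rule carve_cons_prob[OF fin])
  also have "\<dots> \<le> (\<Sum>r\<in>set_pmf rp. pmf rp r * ((indicator {r. m \<le> r \<and> r < M} r::real) + (indicator {r. r < m} r::real) * F))"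
    by (rule sum_pmf_mono[OF fin pt])
  also have "\<dots> = measure_pmf.prob rp {r. m \<le> r \<and> r < M} + F * measure_pmf.prob rp {r. r < m}"
    by (simp add: prob_as_sum[OF fin] algebra_simps sum.distrib sum_distrib_left)
  also have "\<dots> \<le> \<kappa> * D * (G + e) + F * (1 - G)"
  proof -
    have "M - m \<le> D" using Cons.prems unfolding M_def m_def by auto
    from key[OF this] have "measure_pmf.prob rp {r. m \<le> r \<and> r < M} \<le> \<kappa> * D * (G + e)"
      unfolding G_def .
    then show ?thesis by (simp add: prob_lt_compl G_def)
  qed
  also have "\<dots> \<le> \<kappa>*D*(1 + length (v#vs) * e)"
  proof -
    have G: "0 \<le> G" unfolding G_def by simp
    have "\<kappa> * D * (1 + length (v#vs) * e) - (\<kappa> * D * (G + e) + F * (1 - G)) = (\<kappa> * D) * (G * (length vs * e))"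
      unfolding F_def by (simp add: algebra_simps)
    also have "\<dots> \<ge> 0" using kD G e by simp
    finally show ?thesis by simp
  qed
  finally show ?case unfolding E_def .
qed

lemma card_blocks_insert:
  assumes finR: "finite R" and blocks: "\<forall>B'\<in>P'. B' \<subseteq> R - B" and BR: "B \<subseteq> R"
  shows "card {B'\<in>(if B = {} then P' else insert B P'). B' \<inter> Q \<noteq> {}}
       = (if B \<inter> Q \<noteq> {} then 1 else 0) + card {B'\<in>P'. B' \<inter> (Q - B) \<noteq> {}}"
proof -
  have eq: "{B'\<in>P'. B' \<inter> Q \<noteq> {}} = {B'\<in>P'. B' \<inter> (Q - B) \<noteq> {}}"
    using blocks by blast
  have finP: "finite P'" using blocks finR by (meson Diff_subset Pow_iff finite_Pow_iff rev_finite_subset subsetI subset_trans)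
  show ?thesis
  proof (cases "B = {}")
    case True then show ?thesis using eq by simp
  next
    case False
    have notin: "B \<notin> P'" using blocks False by blast
    show ?thesis
    proof (cases "B \<inter> Q = {}")
      case True
      then have "{B'\<in>insert B P'. B' \<inter> Q \<noteq> {}} = {B'\<in>P'. B' \<inter> Q \<noteq> {}}" by auto
      then show ?thesis using False True eq by simp
    next
      case F2: False
      then have "{B'\<in>insert B P'. B' \<inter> Q \<noteq> {}} = insert B {B'\<in>P'. B' \<inter> Q \<noteq> {}}" by auto
      moreover have "finite {B'\<in>P'. B' \<inter> Q \<noteq> {}}" using finP by simp
      ultimately show ?thesis using False F2 eq notin by simp
    qed
  qed
qed

lemma carve_tail:
  fixes \<kappa> D e a t :: real
  assumes fin: "finite (set_pmf rp)" and nn: "\<forall>r\<in>set_pmf rp. 0 \<le> r"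
    and key: "\<And>a b. b - a \<le> D \<Longrightarrow> measure_pmf.prob rp {r. a \<le> r \<and> r < b} \<le> \<kappa> * D * (measure_pmf.prob rp {r. a \<le> r} + e)"
    and e: "0 \<le> e" and a: "a = \<kappa> * D" "0 \<le> a" "a \<le> 1/6"
    and small: "2*a*e*length vs \<le> 1/4"
    and dv: "\<forall>v\<in>set vs. \<forall>q\<in>Q. \<forall>q'\<in>Q. d v q \<le> d v q' + D"
    and Q: "Q \<noteq> {}" "Q \<subseteq> R" "finite R"
  shows "measure_pmf.prob (carve d rp vs R) {P. real (card {B\<in>P. B \<inter> Q \<noteq> {}}) > t}
          \<le> 2 * (5/4 + 2*a*e*length vs) * (1/2) powr t"
  using small dv Q
proof (induction vs arbitrary: R Q t)
  case Nil
  show ?case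
  proof (cases "t < 0")
    case True
    have "(1/2::real) powr t \<ge> 1" using True by (smt (verit, ccfv_SIG) divide_less_eq_1 half_gt_zero powr01_less_one)
    then have "1 \<le> 2 * (5/4 + 2*a*e*length ([]::nat list)) * (1/2::real) powr t" by simp
    moreover have "measure_pmf.prob (carve d rp [] R) {P. real (card {B\<in>P. B \<inter> Q \<noteq> {}}) > t} \<le> 1" by simp
    ultimately show ?thesis by linarith
  next
    case False
    then have "measure_pmf.prob (carve d rp [] R) {P. real (card {B\<in>P. B \<inter> Q \<noteq> {}}) > t} = 0"
      by (intro prob_zero_support) auto
    then show ?thesis by simp
  qed
next
  case (Cons v vs)
  define k where "k = length vs"
  define A where "A = 5/4 + 2*a*e*k"
  define u where "u = (1/2::real) powr t"
  define m where "m = Min ((\<lambda>q. d v q) ` Q)"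
  define G where "G = measure_pmf.prob rp {r. m \<le> r}"
  define Pb where "Pb = measure_pmf.prob rp {r. m \<le> r \<and> r < m + D}"
  have finQ: "finite Q" using Cons.prems finite_subset by blast
  have mle: "\<And>q. q \<in> Q \<Longrightarrow> m \<le> d v q" unfolding m_def using finQ by simp
  obtain q0 where q0: "q0 \<in> Q" "d v q0 = m" unfolding m_def using finQ Cons.prems
    by (metis (no_types, lifting) Min_in finite_imageI image_iff image_is_empty)
  have A1: "5/4 \<le> A" unfolding A_def using a(2) e by simp
  have ae: "0 \<le> 2*a*e" using a(2) e by simp
  have "2*a*e*k \<le> 2*a*e*length (v#vs)" unfolding k_def using ae by (intro mult_left_mono) auto
  then have smallvs: "2*a*e*length vs \<le> 1/4" using Cons.prems(1) unfolding k_def by linarith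
  have "2*a*e*k \<le> 2*a*e*length (v#vs)" unfolding k_def using ae by (intro mult_left_mono) auto
  then have A2: "A \<le> 3/2" using Cons.prems(1) unfolding A_def by linarith
  have u0: "0 \<le> u" unfolding u_def by simp
  let ?B = "\<lambda>r. {z\<in>R. d v z \<le> r}"
  let ?g = "\<lambda>r P. if ?B r = {} then P else insert (?B r) P"
  let ?E = "{P. real (card {B\<in>P. B \<inter> Q \<noteq> {}}) > t}"
  have pt: "measure_pmf.prob (carve d rp vs (R - ?B r)) (?g r -` ?E)
      \<le> u * (2 * indicator {r. m \<le> r} r + (4*A - 2) * indicator {r. m \<le> r \<and> r < m + D} r
              + 2 * A * indicator {r. r < m} r)" if r: "r \<in> set_pmf rp" for r
  proof -
    have reach: "?B r \<inter> Q \<noteq> {} \<longleftrightarrow> m \<le> r"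
    proof
      assume "?B r \<inter> Q \<noteq> {}"
      then obtain z where "z \<in> Q" "d v z \<le> r" by auto
      then show "m \<le> r" using mle[of z] by linarith
    next
      assume "m \<le> r"
      then have "q0 \<in> ?B r \<inter> Q" using q0 Cons.prems by auto
      then show "?B r \<inter> Q \<noteq> {}" by blast
    qed
    have cardeq: "P' \<in> ?g r -` ?E \<longleftrightarrow> P' \<in> {P. real ((if ?B r \<inter> Q \<noteq> {} then 1 else 0) + card {B'\<in>P. B' \<inter> (Q - ?B r) \<noteq> {}}) > t}"
      if "P' \<in> set_pmf (carve d rp vs (R - ?B r))" for P'
    proof -
      have "\<forall>B'\<in>P'. B' \<subseteq> R - ?B r" using carve_blocks[OF that] by blast
      from card_blocks_insert[OF \<open>finite R\<close> this, of Q] show ?thesis by auto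
    qed
    have IHapp: "measure_pmf.prob (carve d rp vs (R - ?B r)) {P. real (card {B'\<in>P. B' \<inter> Q' \<noteq> {}}) > s} \<le> 2 * A * (1/2) powr s"
      if "Q' \<noteq> {}" "Q' \<subseteq> R - ?B r" "Q' \<subseteq> Q" for Q' s
      unfolding A_def k_def
    proof (rule Cons.IH)
      show "2*a*e*length vs \<le> 1/4" using smallvs .
      show "\<forall>v\<in>set vs. \<forall>q\<in>Q'. \<forall>q'\<in>Q'. d v q \<le> d v q' + D"
        using Cons.prems(2) that(3) by (meson list.set_intros(2) subsetD)
      show "Q' \<noteq> {}" "Q' \<subseteq> R - ?B r" "finite (R - ?B r)" using that Cons.prems by auto
    qed
    consider "m \<le> r" "Q - ?B r = {}" | "m \<le> r" "Q - ?B r \<noteq> {}" | "r < m" by linarith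
    then show ?thesis
    proof cases
      case 1
      have "measure_pmf.prob (carve d rp vs (R - ?B r)) (?g r -` ?E) =
          measure_pmf.prob (carve d rp vs (R - ?B r)) {P. 1 > t}"
        apply (rule prob_cong_support) apply (subst cardeq, assumption) by (simp add: 1 reach)
      also have "\<dots> \<le> 2 * u"
      proof (cases "1 > t")
        case True
        have "(1/2::real) powr t \<ge> (1/2) powr 1" using True by (intro powr_mono') auto
        then show ?thesis using True unfolding u_def by simp
      next
        case False then show ?thesis using u0 by simp
      qed
      moreover
      have "u * (2 * indicator {r. m \<le> r} r + (4*A - 2) * indicator {r. m \<le> r \<and> r < m + D} r
              + 2 * A * indicator {r. r < m} r) = 2 * u + u * ((4*A - 2) * indicator {r. m \<le> r \<and> r < m + D} r)"
        using 1 by (simp add: indicator_def algebra_simps)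
      moreover have "0 \<le> u * ((4*A - 2) * indicator {r. m \<le> r \<and> r < m + D} r)"
        using A1 u0 by simp
      ultimately show ?thesis by linarith
    next
      case 2
      then obtain q' where q': "q' \<in> Q" "d v q' > r" using Cons.prems by force
      have "d v q' \<le> d v q0 + D" using Cons.prems q' q0 by auto
      then have band: "r < m + D" using q' q0 by simp
      have "measure_pmf.prob (carve d rp vs (R - ?B r)) (?g r -` ?E) =
          measure_pmf.prob (carve d rp vs (R - ?B r)) {P. real (card {B'\<in>P. B' \<inter> (Q - ?B r) \<noteq> {}}) > t - 1}"
        apply (rule prob_cong_support) apply (subst cardeq, assumption) using reach 2 by auto
      also have "\<dots> \<le> 2 * A * (1/2) powr (t - 1)"
        by (rule IHapp) (use 2 Cons.prems in auto)
      also have "\<dots> = 4 * A * u" unfolding u_def by (simp add: powr_diff)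
      finally show ?thesis using 2 band A1 u0 by (simp add: indicator_def algebra_simps)
    next
      case 3
      then have "?B r \<inter> Q = {}" using reach by linarith
      then have QB: "Q - ?B r = Q" by blast
      have "measure_pmf.prob (carve d rp vs (R - ?B r)) (?g r -` ?E) =
          measure_pmf.prob (carve d rp vs (R - ?B r)) {P. real (card {B'\<in>P. B' \<inter> Q \<noteq> {}}) > t}"
        apply (rule prob_cong_support) apply (subst cardeq, assumption) using reach 3 QB by auto
      also have "\<dots> \<le> 2 * A * u" unfolding u_def
        by (rule IHapp) (use 3 Cons.prems \<open>?B r \<inter> Q = {}\<close> in auto)
      moreover
      have "u * (2 * indicator {r. m \<le> r} r + (4*A - 2) * indicator {r. m \<le> r \<and> r < m + D} r
              + 2 * A * indicator {r. r < m} r) = 2 * A * u"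
        using 3 by (simp add: indicator_def)
      ultimately show ?thesis by linarith
    qed
  qed
  have "measure_pmf.prob (carve d rp (v#vs) R) ?E =
      (\<Sum>r\<in>set_pmf rp. pmf rp r * measure_pmf.prob (carve d rp vs (R - ?B r)) (?g r -` ?E))"
    by (rule carve_cons_prob[OF fin])
  also have "\<dots> \<le> (\<Sum>r\<in>set_pmf rp. pmf rp r * (u * (2 * indicator {r. m \<le> r} r + (4*A - 2) * indicator {r. m \<le> r \<and> r < m + D} r
              + 2 * A * indicator {r. r < m} r)))"
    by (rule sum_pmf_mono[OF fin pt])
  also have "\<dots> = u * (2 * G + (4*A-2) * Pb + 2 * A * measure_pmf.prob rp {r. r < m})"
    unfolding G_def Pb_def
    by (simp add: prob_as_sum[OF fin] algebra_simps sum.distrib sum_distrib_left sum_subtractf)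
  also have "\<dots> = 2 * u * (G + (2*A-1) * Pb + A * (1 - G))"
    by (simp add: prob_lt_compl G_def algebra_simps)
  also have "\<dots> \<le> 2 * u * (A + 2*a*e)"
  proof -
    have Pb: "Pb \<le> a * (G + e)" unfolding Pb_def G_def a by (rule key) simp
    have G0: "0 \<le> G" unfolding G_def by simp
    have c1: "(2*A-1) * a \<le> A - 1"
    proof -
      have "(2*A-1) * a \<le> (2*A-1) * (1/6)" using a A1 by (intro mult_left_mono) auto
      moreover have "(2*A-1) * (1/6) \<le> A - 1" using A1 by (simp add: algebra_simps)
      ultimately show ?thesis by linarith
    qed
    have "G + (2*A-1) * Pb + A * (1 - G) \<le> G + (2*A-1) * (a * (G + e)) + A * (1 - G)"
      using Pb A1 by (intro add_mono mult_left_mono) auto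
    also have "\<dots> = A + G * ((2*A-1) * a - (A - 1)) + (2*A-1) * a * e" by (simp add: algebra_simps)
    also have "\<dots> \<le> A + 0 + 2 * a * e"
    proof (intro add_mono)
      show "G * ((2*A-1) * a - (A - 1)) \<le> 0" using G0 c1 by (simp add: mult_nonneg_nonpos)
      show "(2*A-1) * a * e \<le> 2 * a * e" using A2 a e by (intro mult_right_mono) auto
    qed simp
    finally show ?thesis using u0 by (intro mult_left_mono) auto
  qed
  also have "\<dots> = 2 * (5/4 + 2*a*e*length (v#vs)) * (1/2) powr t"
    unfolding u_def A_def k_def by (simp add: algebra_simps)
  finally show ?case .
qed

lemma geom_sum:
  fixes p :: real
  shows "(\<Sum>i\<in>{j..<j+N}. (1-p)^i * p) = (1-p)^j - (1-p)^(j+N)"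
proof (induction N)
  case 0 then show ?case by simp
next
  case (Suc N)
  have "{j..<j + Suc N} = insert (j+N) {j..<j+N}" by auto
  then have "(\<Sum>i\<in>{j..<j+Suc N}. (1-p)^i * p) = (1-p)^(j+N) * p + (\<Sum>i\<in>{j..<j+N}. (1-p)^i * p)"
    by simp
  also have "\<dots> = (1-p)^j - (1-p)^(j+Suc N)" using Suc by (simp add: algebra_simps)
  finally show ?case .
qed

definition kpmf :: "real \<Rightarrow> nat \<Rightarrow> nat pmf" where
  "kpmf p K = cond_pmf (geometric_pmf p) {..K}"

lemma kpmf_facts:
  fixes p :: real
  assumes p: "0 < p" "p < 1"
  shows "set_pmf (kpmf p K) = {..K}"
    and "measure_pmf.prob (kpmf p K) T = (\<Sum>i\<in>T \<inter> {..K}. (1-p)^i * p) / (1 - (1-p)^(K+1))"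
    and "0 < 1 - (1-p)^(K+1)"
proof -
  have ne: "set_pmf (geometric_pmf p) \<inter> {..K} \<noteq> {}" using p by (simp add: set_pmf_geometric)
  show S: "set_pmf (kpmf p K) = {..K}" unfolding kpmf_def using p by (simp add: set_pmf_geometric[OF p] set_cond_pmf[OF ne])
  have W: "measure_pmf.prob (geometric_pmf p) {..K} = 1 - (1-p)^(K+1)"
  proof -
    have "measure_pmf.prob (geometric_pmf p) {..K} = sum (pmf (geometric_pmf p)) {..K}"
      by (simp add: measure_measure_pmf_finite)
    also have "\<dots> = (\<Sum>i\<in>{0..<0+(K+1)}. (1-p)^i * p)"
      using p by (intro sum.cong) (auto simp: pmf_geometric)
    also have "\<dots> = (1-p)^0 - (1-p)^(0+(K+1))" by (rule geom_sum)
    finally show ?thesis by simp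
  qed
  have pos: "(1-p)^(K+1) < 1" using p power_Suc_less_one[of "1-p" K] by simp
  then show "0 < 1 - (1-p)^(K+1)" by simp
  have "measure_pmf.prob (kpmf p K) T = measure_pmf.prob (kpmf p K) (T \<inter> {..K})"
    by (metis S measure_Int_set_pmf)
  also have "\<dots> = sum (pmf (kpmf p K)) (T \<inter> {..K})" by (simp add: measure_measure_pmf_finite)
  also have "\<dots> = (\<Sum>i\<in>T \<inter> {..K}. (1-p)^i * p / (1 - (1-p)^(K+1)))"
    unfolding kpmf_def using p by (intro sum.cong) (auto simp: pmf_cond[OF ne] W pmf_geometric)
  finally show "measure_pmf.prob (kpmf p K) T = (\<Sum>i\<in>T \<inter> {..K}. (1-p)^i * p) / (1 - (1-p)^(K+1))"
    by (simp add: sum_divide_distrib)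
qed

lemma kpmf_key:
  fixes p h D a b :: real
  assumes p: "0 < p" "p < 1" and h: "0 < h" "h \<le> D" and ab: "b - a \<le> D"
  shows "measure_pmf.prob (map_pmf (\<lambda>k. h * real k) (kpmf p K)) {r. a \<le> r \<and> r < b}
     \<le> (2*p/h) * D * (measure_pmf.prob (map_pmf (\<lambda>k. h * real k) (kpmf p K)) {r. a \<le> r}
          + (1-p)^(K+1) / (1 - (1-p)^(K+1)))"
proof -
  define W where "W = 1 - (1-p)^(K+1)"
  define e where "e = (1-p)^(K+1) / W"
  have W0: "0 < W" unfolding W_def using kpmf_facts(3)[OF p] .
  have e0: "0 \<le> e" unfolding e_def using W0 p by simp
  define T where "T = {k. a \<le> h * real k \<and> h * real k < b}"
  define G where "G = measure_pmf.prob (kpmf p K) {k. a \<le> h * real k}"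
  have G0: "0 \<le> G" unfolding G_def by simp
  have band: "measure_pmf.prob (map_pmf (\<lambda>k. h * real k) (kpmf p K)) {r. a \<le> r \<and> r < b}
      = measure_pmf.prob (kpmf p K) T" unfolding T_def by (simp add: vimage_def)
  have reach: "measure_pmf.prob (map_pmf (\<lambda>k. h * real k) (kpmf p K)) {r. a \<le> r} = G"
    unfolding G_def by (simp add: vimage_def)
  have RHS0: "0 \<le> (2*p/h) * D * (G + e)" using p h G0 e0 by simp
  show ?thesis
  proof (cases "T \<inter> {..K} = {}")
    case True
    then have "measure_pmf.prob (kpmf p K) T = 0" by (simp add: kpmf_facts(2)[OF p])
    then show ?thesis using band reach RHS0 e_def W_def by simp
  next
    case False
    then obtain k1 where k1: "k1 \<in> T" "k1 \<le> K" by auto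
    define j where "j = (LEAST k. a \<le> h * real k)"
    have aj: "a \<le> h * real j" unfolding j_def by (rule LeastI[of _ k1]) (use k1 T_def in auto)
    have jk1: "j \<le> k1" unfolding j_def by (rule Least_le) (use k1 T_def in auto)
    have iff: "a \<le> h * real k \<longleftrightarrow> j \<le> k" for k
    proof
      assume "a \<le> h * real k" then show "j \<le> k" unfolding j_def by (rule Least_le)
    next
      assume "j \<le> k" then have "h * real j \<le> h * real k" using h by simp
      then show "a \<le> h * real k" using aj by linarith
    qed
    define N where "N = nat \<lceil>D / h\<rceil>"
    have NDh: "real N \<le> 2 * D / h"
    proof -
      have "0 < D/h" using h by simp
      then have c0: "0 \<le> \<lceil>D/h\<rceil>" by simp
      have "real N = of_int \<lceil>D/h\<rceil>" unfolding N_def using c0 by simp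
      then have "real N \<le> D / h + 1" using ceiling_correct[of "D/h"] by linarith
      moreover have "1 \<le> D / h" using h by simp
      ultimately show ?thesis by simp
    qed
    have sub: "T \<inter> {..K} \<subseteq> {j..<j+N}"
    proof
      fix k assume k: "k \<in> T \<inter> {..K}"
      then have jk: "j \<le> k" using iff T_def by auto
      have "h * real k < h * real j + D" using k aj ab unfolding T_def by auto
      then have "(real k - real j) * h < D" by (simp add: algebra_simps)
      then have "real k - real j < D / h" using h by (simp add: pos_less_divide_eq)
      moreover have "D / h \<le> real N"
      proof -
        have "0 < D/h" using h by simp
      then have c0: "0 \<le> \<lceil>D/h\<rceil>" by simp
        have "real N = of_int \<lceil>D/h\<rceil>" unfolding N_def using c0 by simp
        then show ?thesis by simp
      qed
      ultimately have "k < j + N" by linarith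
      then show "k \<in> {j..<j+N}" using jk by simp
    qed
    have "measure_pmf.prob (kpmf p K) T = (\<Sum>i\<in>T \<inter> {..K}. (1-p)^i * p) / W"
      unfolding W_def by (rule kpmf_facts(2)[OF p])
    also have "\<dots> \<le> (\<Sum>i\<in>{j..<j+N}. (1-p)^i * p) / W"
      using W0 p by (intro divide_right_mono sum_mono2 sub) auto
    also have "\<dots> = ((1-p)^j - (1-p)^(j+N)) / W" by (simp only: geom_sum)
    also have "\<dots> = (1-p)^j * (1 - (1-p)^N) / W" by (simp add: power_add algebra_simps)
    also have "\<dots> \<le> (1-p)^j * (real N * p) / W"
    proof -
      have "1 + real N * (-p) \<le> (1 + (-p))^N" using p by (intro Bernoulli_inequality) auto
      then have "1 - (1-p)^N \<le> real N * p" by simp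
      then show ?thesis using W0 p by (intro divide_right_mono mult_left_mono) auto
    qed
    also have "\<dots> = real N * p * (G + e)"
    proof -
      have seteq: "{k. a \<le> h * real k} \<inter> {..K} = {j..<j + (K + 1 - j)}"
      proof
        show "{k. a \<le> h * real k} \<inter> {..K} \<subseteq> {j..<j + (K + 1 - j)}"
        proof
          fix k assume "k \<in> {k. a \<le> h * real k} \<inter> {..K}"
          then have "j \<le> k" "k \<le> K" using iff[of k] by auto
          then show "k \<in> {j..<j + (K + 1 - j)}" by simp
        qed
        show "{j..<j + (K + 1 - j)} \<subseteq> {k. a \<le> h * real k} \<inter> {..K}"
        proof
          fix k assume "k \<in> {j..<j + (K + 1 - j)}"
          then have "j \<le> k" "k \<le> K" by auto
          then show "k \<in> {k. a \<le> h * real k} \<inter> {..K}" using iff[of k] by simp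
        qed
      qed
      have jK: "j + (K + 1 - j) = K + 1" using jk1 k1 by simp
      have "G = (\<Sum>i\<in>{j..<j + (K + 1 - j)}. (1-p)^i * p) / W"
        unfolding G_def W_def by (simp only: kpmf_facts(2)[OF p] seteq)
      also have "\<dots> = ((1-p)^j - (1-p)^(j + (K + 1 - j))) / W" by (simp only: geom_sum)
      finally have "G = ((1-p)^j - (1-p)^(K+1)) / W" by (simp only: jK)
      then have "G + e = (1-p)^j / W" unfolding e_def using W0 by (simp add: diff_divide_distrib)
      then show ?thesis by simp
    qed
    also have "\<dots> \<le> (2 * D / h) * p * (G + e)"
      using NDh p G0 e0 by (intro mult_right_mono) auto
    also have "\<dots> = (2*p/h) * D * (G + e)" by simp
    finally show ?thesis using band reach unfolding e_def W_def by simp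
  qed
qed

lemma cluster_eq:
  assumes "partition_on X Part" "B \<in> Part" "x \<in> B"
  shows "cluster Part x = B"
  unfolding cluster_def
proof (rule the_equality)
  show "B \<in> Part \<and> x \<in> B" using assms by simp
  fix S assume "S \<in> Part \<and> x \<in> S"
  then show "S = B" using assms partition_onD2[OF assms(1)] unfolding disjoint_def by blast
qed

lemma path_close:
  assumes sp: "shortest_path X d P" and m: "metric_on X d" and q: "q \<in> set P"
  shows "d (hd P) q \<le> d (hd P) (last P)"
proof -
  have ne: "P \<noteq> []" and sub: "set P \<subseteq> X" and sum: "(\<Sum>i<length P - 1. d (P ! i) (P ! Suc i)) = d (hd P) (last P)"
    using sp unfolding shortest_path_def by auto
  have inX: "\<And>i. i < length P \<Longrightarrow> P ! i \<in> X" using sub by auto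
  have tri: "\<And>x y z. x \<in> X \<Longrightarrow> y \<in> X \<Longrightarrow> z \<in> X \<Longrightarrow> d x z \<le> d x y + d y z"
    using m unfolding metric_on_def by blast
  have nn: "\<And>x y. x \<in> X \<Longrightarrow> y \<in> X \<Longrightarrow> 0 \<le> d x y"
    using m unfolding metric_on_def by blast
  have step: "i < length P \<Longrightarrow> d (P ! 0) (P ! i) \<le> (\<Sum>j<i. d (P ! j) (P ! Suc j))" for i
  proof (induction i)
    case 0
    have "d (P!0) (P!0) = 0" using m inX[of 0] 0 unfolding metric_on_def by auto
    then show ?case by simp
  next
    case (Suc i)
    have "d (P ! 0) (P ! Suc i) \<le> d (P!0) (P!i) + d (P!i) (P!Suc i)"
      using Suc.prems by (intro tri inX) auto
    also have "\<dots> \<le> (\<Sum>j<i. d (P ! j) (P ! Suc j)) + d (P!i) (P!Suc i)"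
      using Suc by simp
    finally show ?case by simp
  qed
  obtain i where i: "i < length P" "q = P ! i" using q by (metis in_set_conv_nth)
  have "d (hd P) q \<le> (\<Sum>j<i. d (P ! j) (P ! Suc j))"
    using step[OF i(1)] i ne by (simp add: hd_conv_nth)
  also have "\<dots> \<le> (\<Sum>j<length P - 1. d (P ! j) (P ! Suc j))"
    using i by (intro sum_mono2) (auto intro!: nn inX)
  finally show ?thesis using sum by simp
qed

lemma small_case:
  assumes fin: "finite X" and m: "metric_on X d" and n: "card X \<le> 1" and Dpos: "0 \<le> \<Delta>"
  shows "\<exists>\<mu> :: nat set set pmf.
         (\<forall>Part\<in>set_pmf \<mu>. partition_on X Part) \<and>
         (\<forall>Part\<in>set_pmf \<mu>. \<forall>S\<in>Part. diam d S \<le> \<Delta>) \<and>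
         (\<forall>x\<in>X. \<forall>y\<in>X.
            measure_pmf.prob \<mu> {Part. cluster Part x \<noteq> cluster Part y} \<le> \<beta> * d x y / \<Delta>) \<and>
         (\<forall>P t :: real. shortest_path X d P \<and> path_length d P \<le> \<Delta> / \<beta> \<and> t \<ge> 1 \<longrightarrow>
            measure_pmf.prob \<mu> {Part. real (degree_sep P Part) > t} \<le> 2 * exp (- c * t))"
proof -
  have one: "\<And>x y. x \<in> X \<Longrightarrow> y \<in> X \<Longrightarrow> x = y" using n fin card_le_Suc0_iff_eq[of X] by auto
  define Part0 where "Part0 = (if X = {} then {} else {X})"
  have part: "partition_on X Part0" unfolding Part0_def
    by (auto simp: partition_on_empty partition_on_space)
  show ?thesis
  proof (intro exI[of _ "return_pmf Part0"] conjI ballI allI impI)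
    show "partition_on X Part" if "Part \<in> set_pmf (return_pmf Part0)" for Part using that part by simp
    show "diam d S \<le> \<Delta>" if "Part \<in> set_pmf (return_pmf Part0)" "S \<in> Part" for Part S
    proof -
      have "S = X" "X \<noteq> {}" using that unfolding Part0_def by (auto split: if_splits)
      then obtain a where "X = {a}" using one by blast
      then have "{d x y | x y. x \<in> S \<and> y \<in> S} = {d a a}" using \<open>S = X\<close> by auto
      moreover have "d a a = 0" using m \<open>X = {a}\<close> unfolding metric_on_def by auto
      ultimately show ?thesis unfolding diam_def using Dpos by simp
    qed
    show "measure_pmf.prob (return_pmf Part0) {Part. cluster Part x \<noteq> cluster Part y} \<le> \<beta> * d x y / \<Delta>"
      if "x \<in> X" "y \<in> X" for x y
    proof -
      have "x = y" using one that by blast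
      moreover have "d x x = 0" using m that unfolding metric_on_def by auto
      ultimately show ?thesis by simp
    qed
    fix P and t :: real
    assume asm: "shortest_path X d P \<and> path_length d P \<le> \<Delta> / \<beta> \<and> 1 \<le> t"
    have "degree_sep P Part0 \<le> 1" unfolding degree_sep_def Part0_def
      by (auto simp: card_le_Suc0_iff_eq)
    then have "measure_pmf.prob (return_pmf Part0) {Part. real (degree_sep P Part) > t} = 0"
      using asm by simp
    then show "measure_pmf.prob (return_pmf Part0) {Part. real (degree_sep P Part) > t} \<le> 2 * exp (- c * t)"
      by simp
  qed
qed

lemma final_ineq:
  fixes t :: real assumes t: "1 \<le> t"
  shows "3 * (1/2) powr t \<le> 2 * exp (- ln (4/3) * t)"
proof -
  have e: "exp (- ln (4/3) * t) = (3/4) powr t"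
  proof -
    have "ln (3/4::real) = - ln (4/3)" by (simp add: ln_div)
    then show ?thesis by (simp add: powr_def)
  qed
  have "(1/2::real) powr t = ((2/3) * (3/4)) powr t" by simp
  also have "\<dots> = (2/3) powr t * (3/4) powr t" by (rule powr_mult)
  finally have s: "(1/2::real) powr t = (2/3) powr t * (3/4) powr t" .
  have "(2/3::real) powr t \<le> (2/3) powr 1" using t by (intro powr_mono') auto
  then have "(2/3::real) powr t \<le> 2/3" by simp
  then have "3 * ((2/3) powr t * (3/4) powr t) \<le> 3 * ((2/3) * (3/4::real) powr t)"
    by (intro mult_left_mono mult_right_mono) auto
  then show ?thesis using s e by simp
qed

lemma big_case:
  assumes fin: "finite X" and m: "metric_on X d" and n2: "2 \<le> card X" and Dpos: "0 < \<Delta>"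
  shows "\<exists>\<mu> :: nat set set pmf.
         (\<forall>Part\<in>set_pmf \<mu>. partition_on X Part) \<and>
         (\<forall>Part\<in>set_pmf \<mu>. \<forall>S\<in>Part. diam d S \<le> \<Delta>) \<and>
         (\<forall>x\<in>X. \<forall>y\<in>X.
            measure_pmf.prob \<mu> {Part. cluster Part x \<noteq> cluster Part y} \<le> (256 * ln (real (card X))) * d x y / \<Delta>) \<and>
         (\<forall>P t :: real. shortest_path X d P \<and> path_length d P \<le> \<Delta> / (256 * ln (real (card X))) \<and> t \<ge> 1 \<longrightarrow>
            measure_pmf.prob \<mu> {Part. real (degree_sep P Part) > t} \<le> 2 * exp (- ln (4/3) * t))"
proof -
  define N where "N = real (card X)"
  have N2: "2 \<le> N" unfolding N_def using n2 by simp
  have lnN: "0 < ln N" using N2 by simp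
  define \<beta> where "\<beta> = 256 * ln N"
  have \<beta>pos: "0 < \<beta>" unfolding \<beta>_def using lnN by simp
  have dnn: "\<And>x y. x \<in> X \<Longrightarrow> y \<in> X \<Longrightarrow> 0 \<le> d x y" using m unfolding metric_on_def by blast
  have d0: "\<And>x. x \<in> X \<Longrightarrow> d x x = 0" using m unfolding metric_on_def by blast
  have dpos: "\<And>x y. x \<in> X \<Longrightarrow> y \<in> X \<Longrightarrow> x \<noteq> y \<Longrightarrow> 0 < d x y"
    using m unfolding metric_on_def by (metis order_le_less)
  have dsym: "\<And>x y. x \<in> X \<Longrightarrow> y \<in> X \<Longrightarrow> d x y = d y x" using m unfolding metric_on_def by blast
  have tri: "\<And>x y z. x \<in> X \<Longrightarrow> y \<in> X \<Longrightarrow> z \<in> X \<Longrightarrow> d x z \<le> d x y + d y z"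
    using m unfolding metric_on_def by blast
  define Ds where "Ds = {d x y | x y. x \<in> X \<and> y \<in> X \<and> x \<noteq> y}"
  have Dsfin: "finite Ds"
  proof -
    have "Ds \<subseteq> (\<lambda>(x,y). d x y) ` (X \<times> X)" unfolding Ds_def by auto
    then show ?thesis using fin finite_subset by blast
  qed
  obtain x1 y1 where xy1: "x1 \<in> X" "y1 \<in> X" "x1 \<noteq> y1"
  proof -
    obtain x1 where "x1 \<in> X" using n2 by fastforce
    moreover have "X - {x1} \<noteq> {}" using n2 \<open>x1 \<in> X\<close> fin
      by (metis Diff_empty Diff_insert0 card.remove card_0_eq finite.emptyI insert_Diff
          nat_le_linear not_less_eq_eq numeral_2_eq_2 one_le_numeral)
    ultimately show ?thesis using that by blast
  qed
  have Dsne: "Ds \<noteq> {}" unfolding Ds_def using xy1 by blast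
  define \<delta> where "\<delta> = Min Ds"
  have \<delta>pos: "0 < \<delta>"
  proof -
    have "\<delta> \<in> Ds" unfolding \<delta>_def using Dsfin Dsne by simp
    then show ?thesis unfolding Ds_def using dpos by auto
  qed
  have \<delta>le: "\<And>x y. x \<in> X \<Longrightarrow> y \<in> X \<Longrightarrow> x \<noteq> y \<Longrightarrow> \<delta> \<le> d x y"
    unfolding \<delta>_def using Dsfin by (intro Min_le) (auto simp: Ds_def)
  define lam where "lam = 4 * ln N / \<Delta>"
  have lampos: "0 < lam" unfolding lam_def using lnN Dpos by simp
  define h where "h = min \<delta> (min (\<Delta>/2) (1/(2*lam)))"
  have hpos: "0 < h" unfolding h_def using \<delta>pos Dpos lampos by simp
  have hdel: "h \<le> \<delta>" "h \<le> \<Delta>/2" "h \<le> 1/(2*lam)" unfolding h_def by auto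
  define p where "p = lam * h"
  have ppos: "0 < p" unfolding p_def using lampos hpos by simp
  have plt: "p < 1"
  proof -
    have "p \<le> lam * (1/(2*lam))" unfolding p_def using hdel lampos by (intro mult_left_mono) auto
    also have "\<dots> = 1/2" using lampos by simp
    finally show ?thesis by simp
  qed
  define K where "K = nat \<lfloor>\<Delta>/(2*h)\<rfloor>"
  have Kfl: "real K = of_int \<lfloor>\<Delta>/(2*h)\<rfloor>"
  proof -
    have "0 \<le> \<Delta>/(2*h)" using Dpos hpos by simp
    then show ?thesis unfolding K_def by simp
  qed
  have hK: "h * real K \<le> \<Delta>/2"
  proof -
    have "real K \<le> \<Delta>/(2*h)" using Kfl by simp
    then have "h * real K \<le> h * (\<Delta>/(2*h))" using hpos by (intro mult_left_mono) auto
    also have "\<dots> = \<Delta>/2" using hpos by simp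
    finally show ?thesis .
  qed
  have hK1: "\<Delta>/2 \<le> h * (real K + 1)"
  proof -
    have "\<Delta>/(2*h) \<le> real K + 1" using Kfl by linarith
    then have "h * (\<Delta>/(2*h)) \<le> h * (real K + 1)" using hpos by (intro mult_left_mono) auto
    moreover have "h * (\<Delta>/(2*h)) = \<Delta>/2" using hpos by simp
    ultimately show ?thesis by simp
  qed
  define rp where "rp = map_pmf (\<lambda>k. h * real k) (kpmf p K)"
  have setrp: "set_pmf rp = (\<lambda>k. h * real k) ` {..K}"
    unfolding rp_def using kpmf_facts(1)[OF ppos plt] by simp
  have rpfin: "finite (set_pmf rp)" using setrp by simp
  have rpnn: "\<forall>r\<in>set_pmf rp. 0 \<le> r" using setrp hpos by auto
  have rple: "\<forall>r\<in>set_pmf rp. r \<le> \<Delta>/2"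
  proof
    fix r assume "r \<in> set_pmf rp"
    then obtain k where k: "k \<le> K" "r = h * real k" using setrp by auto
    then have "h * real k \<le> h * real K" using hpos by (intro mult_left_mono) auto
    then show "r \<le> \<Delta>/2" using k hK by simp
  qed
  define \<epsilon> where "\<epsilon> = (1-p)^(K+1)"
  define e where "e = \<epsilon> / (1 - \<epsilon>)"
  have \<epsilon>0: "0 \<le> \<epsilon>" unfolding \<epsilon>_def using plt by simp
  have \<epsilon>le: "\<epsilon> \<le> 1 / (N*N)"
  proof -
    have "1 - p \<le> exp (-p)" using exp_ge_add_one_self[of "-p"] by simp
    then have "\<epsilon> \<le> exp (-p) ^ (K+1)" unfolding \<epsilon>_def using plt by (intro power_mono) auto
    also have "\<dots> = exp (real (K+1) * (-p))" by (rule exp_of_nat_mult[symmetric])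
    also have "\<dots> \<le> exp (- (ln N + ln N))"
    proof -
      have "lam * (\<Delta>/2) \<le> lam * (h * (real K + 1))" using hK1 lampos by (intro mult_left_mono) auto
      moreover have "lam * (\<Delta>/2) = ln N + ln N" unfolding lam_def using Dpos by simp
      ultimately have "ln N + ln N \<le> real (K+1) * p" unfolding p_def by (simp add: algebra_simps)
      then show ?thesis by simp
    qed
    also have "\<dots> = 1 / (N*N)"
    proof -
      have "exp (ln N + ln N) = N * N" using N2 by (subst exp_add) simp
      then show ?thesis by (simp only: exp_minus inverse_eq_divide)
    qed
    finally show ?thesis .
  qed
  have NN4: "4 \<le> N*N" using mult_mono[OF N2 N2] N2 by simp
  have \<epsilon>lt: "\<epsilon> < 1"
  proof -
    have "1 / (N*N) \<le> 1/4" using NN4 by (intro divide_left_mono) auto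
    then show ?thesis using \<epsilon>le by simp
  qed
  have e0: "0 \<le> e" unfolding e_def using \<epsilon>0 \<epsilon>lt by simp
  have Ne: "N * e \<le> 1"
  proof -
    have "2 * N \<le> N * N" using N2 by (intro mult_right_mono) auto
    then have NN: "N + 1 \<le> N * N" using N2 by linarith
    have "(N + 1) * \<epsilon> \<le> (N * N) * (1/(N*N))"
      using NN \<epsilon>le \<epsilon>0 N2 by (intro mult_mono) auto
    also have "\<dots> = 1" using N2 by simp
    finally have "(N+1) * \<epsilon> \<le> 1" .
    then have "N * \<epsilon> \<le> 1 * (1 - \<epsilon>)" by (simp add: algebra_simps)
    then have "(N * \<epsilon>) / (1 - \<epsilon>) \<le> 1" using \<epsilon>lt by (simp add: pos_divide_le_eq)
    then show ?thesis unfolding e_def by simp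
  qed
  have key: "\<And>a b. b - a \<le> D \<Longrightarrow> measure_pmf.prob rp {r. a \<le> r \<and> r < b} \<le> (2*lam) * D * (measure_pmf.prob rp {r. a \<le> r} + e)"
    if hD: "h \<le> D" for D
  proof -
    fix a b :: real assume ab: "b - a \<le> D"
    have "2*p/h = 2*lam" unfolding p_def using hpos by simp
    then show "measure_pmf.prob rp {r. a \<le> r \<and> r < b} \<le> (2*lam) * D * (measure_pmf.prob rp {r. a \<le> r} + e)"
      using kpmf_key[OF ppos plt hpos hD ab, of K] unfolding rp_def e_def \<epsilon>_def by simp
  qed
  define vs where "vs = sorted_list_of_set X"
  have setvs: "set vs = X" unfolding vs_def using fin by simp
  have lenvs: "real (length vs) = N" unfolding vs_def N_def using fin by simp
  define \<mu> where "\<mu> = carve d rp vs X"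
  have partmu: "\<And>Part. Part \<in> set_pmf \<mu> \<Longrightarrow> partition_on X Part"
    unfolding \<mu>_def using rpnn d0 setvs by (intro carve_partition) auto
  show ?thesis
  proof (intro exI[of _ \<mu>] conjI ballI allI impI)
    show "partition_on X Part" if "Part \<in> set_pmf \<mu>" for Part using partmu[OF that] .
  next
    fix Part S assume Part: "Part \<in> set_pmf \<mu>" and S: "S \<in> Part"
    obtain v r where vr: "v \<in> X" "r \<in> set_pmf rp" "S \<subseteq> {x. d v x \<le> r}" and SX: "S \<subseteq> X"
      using carve_blocks[OF Part[unfolded \<mu>_def] S] setvs by blast
    have Sne: "S \<noteq> {}" using partition_onD3[OF partmu[OF Part]] S by auto
    show "diam d S \<le> \<Delta>" unfolding diam_def
    proof (rule cSup_least)
      show "{d x y |x y. x \<in> S \<and> y \<in> S} \<noteq> {}" using Sne by auto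
      fix z assume "z \<in> {d x y |x y. x \<in> S \<and> y \<in> S}"
      then obtain x y where z: "z = d x y" "x \<in> S" "y \<in> S" by auto
      have "d x y \<le> d x v + d v y" using z SX vr by (intro tri) auto
      also have "\<dots> = d v x + d v y" using z SX vr dsym by auto
      also have "\<dots> \<le> r + r" using z vr by (intro add_mono) auto
      also have "\<dots> \<le> \<Delta>" using rple vr by auto
      finally show "z \<le> \<Delta>" using z by simp
    qed
  next
    fix x y assume x: "x \<in> X" and y: "y \<in> X"
    show "measure_pmf.prob \<mu> {Part. cluster Part x \<noteq> cluster Part y} \<le> (256 * ln (real (card X))) * d x y / \<Delta>"
    proof (cases "x = y")
      case True then show ?thesis using d0[OF y] by simp
    next
      case False
      define D where "D = d x y"
      have hD: "h \<le> D" unfolding D_def using hdel \<delta>le[OF x y False] by simp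
      define E where "E = {P. \<not>(\<exists>B\<in>P. x\<in>B \<and> y\<in>B)}"
      have "measure_pmf.prob \<mu> {Part. cluster Part x \<noteq> cluster Part y}
          = measure_pmf.prob \<mu> ({Part. cluster Part x \<noteq> cluster Part y} \<inter> set_pmf \<mu>)"
        by (simp add: measure_Int_set_pmf)
      also have "\<dots> \<le> measure_pmf.prob \<mu> E"
      proof (rule measure_pmf.finite_measure_mono)
        show "{Part. cluster Part x \<noteq> cluster Part y} \<inter> set_pmf \<mu> \<subseteq> E"
        proof
          fix Part assume "Part \<in> {Part. cluster Part x \<noteq> cluster Part y} \<inter> set_pmf \<mu>"
          then have ne: "cluster Part x \<noteq> cluster Part y" and pp: "partition_on X Part" using partmu by auto
          show "Part \<in> E" unfolding E_def using cluster_eq[OF pp] ne by auto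
        qed
      qed simp
      also have "\<dots> \<le> (2*lam)*D*(1 + length vs * e)"
        unfolding E_def \<mu>_def
      proof (rule carve_sep[OF rpfin rpnn key[OF hD] e0])
        show "0 \<le> 2 * lam * D" using lampos hD hpos by simp
        show "\<forall>v\<in>set vs. \<bar>d v x - d v y\<bar> \<le> D"
        proof
          fix v assume "v \<in> set vs"
          then have v: "v \<in> X" using setvs by simp
          have "d v x \<le> d v y + d y x" using tri v x y by blast
          moreover have "d v y \<le> d v x + d x y" using tri v x y by blast
          moreover have "d y x = d x y" using dsym x y by simp
          ultimately show "\<bar>d v x - d v y\<bar> \<le> D" unfolding D_def by simp
        qed
      qed (use x y d0 setvs in auto)
      also have "\<dots> \<le> (2*lam)*D*2"
        using lenvs Ne lampos hD hpos by (intro mult_left_mono) auto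
      also have "\<dots> = 16 * ln N * D / \<Delta>" unfolding lam_def by simp
      also have "\<dots> \<le> 256 * ln N * D / \<Delta>"
        using lnN hD hpos Dpos by (intro divide_right_mono mult_right_mono) auto
      finally show ?thesis unfolding D_def N_def .
    qed
  next
    fix P and t :: real
    assume asm: "shortest_path X d P \<and> path_length d P \<le> \<Delta> / (256 * ln (real (card X))) \<and> 1 \<le> t"
    then have sp: "shortest_path X d P" and Lle: "path_length d P \<le> \<Delta> / \<beta>" and t: "1 \<le> t"
      unfolding \<beta>_def N_def by auto
    define x0 where "x0 = hd P"
    define L where "L = d x0 (last P)"
    define Q where "Q = set P"
    have Pne: "P \<noteq> []" and QX: "Q \<subseteq> X" using sp unfolding shortest_path_def Q_def by auto
    have x0Q: "x0 \<in> Q" unfolding x0_def Q_def using Pne by simp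
    have lastQ: "last P \<in> Q" unfolding Q_def using Pne by simp
    have close: "\<And>q. q \<in> Q \<Longrightarrow> d x0 q \<le> L"
      unfolding x0_def L_def Q_def using path_close[OF sp m] by blast
    have evt: "{Part. real (degree_sep P Part) > t} = {Part. real (card {B\<in>Part. B \<inter> Q \<noteq> {}}) > t}"
      unfolding degree_sep_def Q_def by simp
    show "measure_pmf.prob \<mu> {Part. real (degree_sep P Part) > t} \<le> 2 * exp (- ln (4/3) * t)"
    proof (cases "L = 0")
      case True
      have Qx0: "\<And>q. q \<in> Q \<Longrightarrow> q = x0"
      proof -
        fix q assume q: "q \<in> Q"
        have "d x0 q \<le> 0" using close[OF q] True by simp
        show "q = x0"
        proof (rule ccontr)
          assume "q \<noteq> x0"
          then have "0 < d x0 q" using dpos[of x0 q] x0Q q QX by blast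
          then show False using \<open>d x0 q \<le> 0\<close> by simp
        qed
      qed
      have "measure_pmf.prob \<mu> {Part. real (degree_sep P Part) > t} = 0"
        unfolding evt
      proof (rule prob_zero_support)
        fix Part assume "Part \<in> set_pmf \<mu>"
        then have pp: "partition_on X Part" by (rule partmu)
        have "{B\<in>Part. B \<inter> Q \<noteq> {}} \<subseteq> {cluster Part x0}"
        proof
          fix B assume "B \<in> {B\<in>Part. B \<inter> Q \<noteq> {}}"
          then have "B \<in> Part" "x0 \<in> B" using Qx0 by auto
          then show "B \<in> {cluster Part x0}" using cluster_eq[OF pp] by simp
        qed
        then have "card {B\<in>Part. B \<inter> Q \<noteq> {}} \<le> card {cluster Part x0}" by (intro card_mono) auto
        then have "card {B\<in>Part. B \<inter> Q \<noteq> {}} \<le> 1" by simp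
        then show "Part \<notin> {Part. real (card {B\<in>Part. B \<inter> Q \<noteq> {}}) > t}" using t by simp
      qed
      then show ?thesis by simp
    next
      case False
      have x0X: "x0 \<in> X" and lX: "last P \<in> X" using x0Q lastQ QX by auto
      have neq: "x0 \<noteq> last P" using False d0[OF x0X] unfolding L_def by auto
      have Lh: "h \<le> L" using hdel \<delta>le[OF x0X lX neq] unfolding L_def by simp
      have L0: "0 \<le> L" using dnn[OF x0X lX] unfolding L_def .
      define a where "a = 2*lam*(2*L)"
      have hD: "h \<le> 2*L" using Lh hpos by simp
      have a0: "0 \<le> a" unfolding a_def using lampos L0 by simp
      have a16: "a \<le> 1/16"
      proof -
        have "L = path_length d P" unfolding L_def x0_def path_length_def ..
        then have "L * \<beta> \<le> \<Delta>" using Lle \<beta>pos by (simp add: pos_le_divide_eq)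
        then have "L * (256 * ln N) \<le> \<Delta>" unfolding \<beta>_def .
        moreover have "a = 16 * ln N * L / \<Delta>" unfolding a_def lam_def by simp
        ultimately show ?thesis using Dpos by (simp add: pos_divide_le_eq algebra_simps)
      qed
      have small: "2*a*e*length vs \<le> 1/4"
      proof -
        have "a * (e * N) \<le> (1/16) * 1" using a16 a0 e0 Ne N2 by (intro mult_mono) (auto simp: mult.commute)
        then show ?thesis using lenvs by (simp add: algebra_simps)
      qed
      have "measure_pmf.prob \<mu> {Part. real (degree_sep P Part) > t}
          \<le> 2 * (5/4 + 2*a*e*length vs) * (1/2) powr t"
        unfolding evt \<mu>_def
      proof (rule carve_tail[OF rpfin rpnn key[OF hD] e0 _ a0 _ small])
        show "a = 2 * lam * (2 * L)" unfolding a_def ..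
        show "a \<le> 1/6" using a16 by simp
        show "\<forall>v\<in>set vs. \<forall>q\<in>Q. \<forall>q'\<in>Q. d v q \<le> d v q' + 2 * L"
        proof (intro ballI)
          fix v q q' assume v: "v \<in> set vs" and q: "q \<in> Q" and q': "q' \<in> Q"
          have vX: "v \<in> X" using v setvs by simp
          have qX: "q \<in> X" "q' \<in> X" using q q' QX by auto
          have "d v q \<le> d v q' + d q' q" using tri vX qX by blast
          also have "d q' q \<le> d q' x0 + d x0 q" using tri qX x0X by blast
          also have "d q' x0 = d x0 q'" using dsym qX x0X by simp
          finally show "d v q \<le> d v q' + 2 * L" using close[OF q] close[OF q'] by simp
        qed
        show "Q \<noteq> {}" "Q \<subseteq> X" "finite X" using x0Q QX fin by auto
      qed
      also have "\<dots> \<le> 2 * (3/2) * (1/2) powr t"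
        using small by (intro mult_right_mono) auto
      also have "\<dots> \<le> 2 * exp (- ln (4/3) * t)" using final_ineq[OF t] by simp
      finally show ?thesis .
    qed
  qed
qed

lemma all_cases:
  assumes asm: "finite X \<and> metric_on X d \<and> \<Delta> > 0"
  shows "\<exists>\<mu> :: nat set set pmf.
         (\<forall>Part\<in>set_pmf \<mu>. partition_on X Part) \<and>
         (\<forall>Part\<in>set_pmf \<mu>. \<forall>S\<in>Part. diam d S \<le> \<Delta>) \<and>
         (\<forall>x\<in>X. \<forall>y\<in>X.
            measure_pmf.prob \<mu> {Part. cluster Part x \<noteq> cluster Part y} \<le> (256 * ln (real (card X))) * d x y / \<Delta>) \<and>
         (\<forall>P t :: real. shortest_path X d P \<and> path_length d P \<le> \<Delta> / (256 * ln (real (card X))) \<and> t \<ge> 1 \<longrightarrow>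
            measure_pmf.prob \<mu> {Part. real (degree_sep P Part) > t} \<le> 2 * exp (- ln (4/3) * t))"
proof (cases "card X \<le> 1")
  case True
  have D0: "0 \<le> \<Delta>" using asm by simp
  show ?thesis using small_case[OF _ _ True D0, where \<beta>="256 * ln (real (card X))" and c="ln (4/3)"] asm by blast
next
  case False
  then have "2 \<le> card X" by simp
  then show ?thesis using big_case[of X d \<Delta>] asm by blast
qed

theorem theorem2:
  shows "\<exists>C c :: real. C > 0 \<and> c > 0 \<and>
    (\<forall>(X :: nat set) (d :: nat \<Rightarrow> nat \<Rightarrow> real) (\<Delta> :: real).
      finite X \<and> metric_on X d \<and> \<Delta> > 0 \<longrightarrow>
      (let \<beta> = C * ln (real (card X)) in
       \<exists>\<mu> :: nat set set pmf.
         (\<forall>Part\<in>set_pmf \<mu>. partition_on X Part) \<and>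
         (\<forall>Part\<in>set_pmf \<mu>. \<forall>S\<in>Part. diam d S \<le> \<Delta>) \<and>
         (\<forall>x\<in>X. \<forall>y\<in>X.
            measure_pmf.prob \<mu> {Part. cluster Part x \<noteq> cluster Part y} \<le> \<beta> * d x y / \<Delta>) \<and>
         (\<forall>P t :: real. shortest_path X d P \<and> path_length d P \<le> \<Delta> / \<beta> \<and> t \<ge> 1 \<longrightarrow>
            measure_pmf.prob \<mu> {Part. real (degree_sep P Part) > t} \<le> 2 * exp (- c * t))))"
proof -
  have "(0::real) < ln (4/3)" by simp
  then show ?thesis using all_cases unfolding Let_def by (intro exI[of _ "256::real"] exI[of _ "ln (4/3)::real"]) auto
qed

end
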